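(* Let $R=\bigoplus_{i\ge0}R_i$ be a graded ring and $s,t\in R_0$ with $sR_0+tR_0=R_0$. Let $\eta\in\mathrm{GL}_n(R_{st},(R_+)_{st})$ with $e_1\eta=e_1$. Then there exist $\eta_1\in\mathrm{GL}_n(R_s,(R_+)_s)$ and $\eta_2\in\mathrm{GL}_n(R_t,(R_+)_t)$ such that $\eta=(\eta_1)_t(\eta_2)_s$ in $\mathrm{GL}_n(R_{st})$, and $e_1\eta_i=e_1$ for $i=1,2$.
   Context: Rings are commutative Noetherian with $1\ne0$ of finite Krull dimension; a graded ring is $R=\bigoplus_{i\ge0}R_i$ with non-trivial $\mathbb N$-grading and $R_+=\bigoplus_{i\ge1}R_i$. For an ideal $I\subset B$, $\mathrm{GL}_n(B,I)=\{\alpha\in\mathrm{GL}_n(B):\alpha\equiv\mathrm{Id}\bmod I\}$. $e_1=(1,0,\dots,0)$. For a matrix $\beta$ over $R_s$, $\beta_t$ denotes its image over $R_{st}$. *)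

theory Defs
  imports "Jordan_Normal_Form.Matrix"
begin

definition is_ideal :: "'a::comm_ring_1 set \<Rightarrow> bool" where
  "is_ideal I \<longleftrightarrow> 0 \<in> I \<and> (\<forall>x\<in>I. \<forall>y\<in>I. x + y \<in> I) \<and> (\<forall>x\<in>I. \<forall>r. r * x \<in> I)"

definition is_prime_ideal :: "'a::comm_ring_1 set \<Rightarrow> bool" where
  "is_prime_ideal P \<longleftrightarrow> is_ideal P \<and> P \<noteq> UNIV \<and> (\<forall>a b. a * b \<in> P \<longrightarrow> a \<in> P \<or> b \<in> P)"

definition noetherian :: "'a::comm_ring_1 itself \<Rightarrow> bool" where
  "noetherian _ \<longleftrightarrow> (\<forall>I :: nat \<Rightarrow> 'a set. (\<forall>i. is_ideal (I i) \<and> I i \<subseteq> I (Suc i))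
        \<longrightarrow> (\<exists>N. \<forall>m\<ge>N. I m = I N))"

definition finite_krull_dim :: "'a::comm_ring_1 itself \<Rightarrow> bool" where
  "finite_krull_dim _ \<longleftrightarrow> (\<exists>d::nat. \<forall>(P :: nat \<Rightarrow> 'a set) m.
        (\<forall>i\<le>m. is_prime_ideal (P i)) \<and> (\<forall>i<m. P i \<subset> P (Suc i)) \<longrightarrow> m \<le> d)"

definition graded_ring :: "(nat \<Rightarrow> 'a::comm_ring_1 set) \<Rightarrow> bool" where
  "graded_ring G \<longleftrightarrow>
     (\<forall>i. 0 \<in> G i \<and> (\<forall>x\<in>G i. \<forall>y\<in>G i. x + y \<in> G i \<and> - x \<in> G i)) \<and>
     (\<forall>i j. \<forall>x\<in>G i. \<forall>y\<in>G j. x * y \<in> G (i + j)) \<and>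
     (\<forall>x. \<exists>!f. (\<forall>i. f i \<in> G i) \<and> finite {i. f i \<noteq> 0} \<and> x = (\<Sum>i\<in>{i. f i \<noteq> 0}. f i))"

definition nontrivial_grading :: "(nat \<Rightarrow> 'a::comm_ring_1 set) \<Rightarrow> bool" where
  "nontrivial_grading G \<longleftrightarrow> (\<exists>i\<ge>1. G i \<noteq> {0})"

definition R_plus :: "(nat \<Rightarrow> 'a::comm_ring_1 set) \<Rightarrow> 'a set" where
  "R_plus G = {x. \<exists>N f. (\<forall>i. f i \<in> G i) \<and> x = (\<Sum>i\<in>{1..N}. f i)}"

text \<open>The pair (a,k) represents a/s^k in R_s.  Equality in R_s:\<close>
definition loc_eq :: "'a::comm_ring_1 \<Rightarrow> 'a \<Rightarrow> nat \<Rightarrow> 'a \<Rightarrow> nat \<Rightarrow> bool" where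
  "loc_eq s a k b m \<longleftrightarrow> (\<exists>l. s ^ l * (a * s ^ m - b * s ^ k) = 0)"

text \<open>Membership of a/s^k in the extended ideal \<open>I_s = {b/s^m. b \<in> I}\<close>.\<close>
definition loc_mem :: "'a::comm_ring_1 \<Rightarrow> 'a set \<Rightarrow> 'a \<Rightarrow> nat \<Rightarrow> bool" where
  "loc_mem s I a k \<longleftrightarrow> (\<exists>b\<in>I. \<exists>m. loc_eq s a k b m)"

text \<open>An n x n matrix over R_s is represented as (A,k), meaning (1/s^k) A with A over R.
  Equality of such matrices in \<open>M_n(R_s)\<close>:\<close>
definition lmat_eq :: "nat \<Rightarrow> 'a::comm_ring_1 \<Rightarrow> 'a mat \<Rightarrow> nat \<Rightarrow> 'a mat \<Rightarrow> nat \<Rightarrow> bool" where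
  "lmat_eq n s A k B m \<longleftrightarrow> (\<forall>i<n. \<forall>j<n. loc_eq s (A $$ (i,j)) k (B $$ (i,j)) m)"

text \<open>(A,k) represents an element of \<open>GL_n(R_s, I_s)\<close>: invertible over R_s and
  congruent to the identity modulo \<open>I_s\<close>.\<close>
definition lGL :: "nat \<Rightarrow> 'a::comm_ring_1 \<Rightarrow> 'a set \<Rightarrow> 'a mat \<Rightarrow> nat \<Rightarrow> bool" where
  "lGL n s I A k \<longleftrightarrow> A \<in> carrier_mat n n \<and>
     (\<exists>B m. B \<in> carrier_mat n n \<and> lmat_eq n s (A * B) (k + m) (1\<^sub>m n) 0
                                  \<and> lmat_eq n s (B * A) (k + m) (1\<^sub>m n) 0) \<and>
     (\<forall>i<n. \<forall>j<n. loc_mem s I (A $$ (i,j) - (if i = j then s ^ k else 0)) k)"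

text \<open>\<open>e_1 (A/s^k) = e_1\<close> in \<open>R_s^n\<close>: the first row equals (1,0,...,0).\<close>
definition first_row_e1 :: "nat \<Rightarrow> 'a::comm_ring_1 \<Rightarrow> 'a mat \<Rightarrow> nat \<Rightarrow> bool" where
  "first_row_e1 n s A k \<longleftrightarrow> (\<forall>j<n. loc_eq s (A $$ (0,j)) k (if j = 0 then 1 else 0) 0)"

end

theory Submission
  imports Defs "Jordan_Normal_Form.Char_Poly"
begin


lemma poly_one_sum: "poly (p::'a::comm_semiring_1 poly) 1 = (\<Sum>i\<in>{i. coeff p i \<noteq> 0}. coeff p i)"
proof -
  have fin: "finite {i. coeff p i \<noteq> 0}"
    by (metis (mono_tags, lifting) finite_nat_set_iff_bounded_le le_degree mem_Collect_eq)
  have "poly p 1 = (\<Sum>i\<le>degree p. coeff p i)" by (simp add: poly_altdef[of p 1])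
  also have "\<dots> = (\<Sum>i\<in>{i. coeff p i \<noteq> 0}. coeff p i)"
    by (rule sum.mono_neutral_right) (auto intro: le_degree)
  finally show ?thesis .
qed

lemma finite_coeff_support: "finite {i. coeff p i \<noteq> 0}"
  by (metis (mono_tags, lifting) finite_nat_set_iff_bounded_le le_degree mem_Collect_eq)

locale grd =
  fixes G :: "nat \<Rightarrow> 'a::comm_ring_1 set"
  assumes gr: "graded_ring G"
begin

lemma G0: "0 \<in> G i" and Gadd: "x \<in> G i \<Longrightarrow> y \<in> G i \<Longrightarrow> x + y \<in> G i"
  and Gneg: "x \<in> G i \<Longrightarrow> - x \<in> G i"
  and Gmult: "x \<in> G i \<Longrightarrow> y \<in> G j \<Longrightarrow> x * y \<in> G (i + j)"
  and Gdec: "\<exists>!f. (\<forall>i. f i \<in> G i) \<and> finite {i. f i \<noteq> 0} \<and> x = (\<Sum>i\<in>{i. f i \<noteq> 0}. f i)"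
  using gr unfolding graded_ring_def by blast+

lemma Gsum: "finite A \<Longrightarrow> (\<And>a. a \<in> A \<Longrightarrow> f a \<in> G i) \<Longrightarrow> sum f A \<in> G i"
  by (induction A rule: finite_induct) (auto intro: G0 Gadd)

definition good :: "'a poly \<Rightarrow> bool" where "good p \<longleftrightarrow> (\<forall>i. coeff p i \<in> G i)"

lemma good_ex1: "\<exists>!p. good p \<and> poly p 1 = x"
proof -
  obtain f where f: "\<forall>i. f i \<in> G i" "finite {i. f i \<noteq> 0}" "x = (\<Sum>i\<in>{i. f i \<noteq> 0}. f i)"
    using Gdec[of x] by blast
  have ev: "\<forall>\<^sub>\<infinity> i. f i = 0" using f(2) by (simp add: MOST_iff_cofinite)
  define p where "p = Abs_poly f"
  have cp: "coeff p = f" unfolding p_def using ev by (simp add: Abs_poly_inverse)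
  have ex: "good p \<and> poly p 1 = x" using f cp by (simp add: good_def poly_one_sum)
  moreover have "q = p" if q: "good q \<and> poly q 1 = x" for q
  proof -
    have "coeff q = coeff p"
      using Gdec[of x] q ex unfolding good_def poly_one_sum
      by (metis finite_coeff_support)
    then show ?thesis by (simp add: poly_eq_iff)
  qed
  ultimately show ?thesis by blast
qed

definition Hm :: "'a \<Rightarrow> 'a poly" where "Hm x = (THE p. good p \<and> poly p 1 = x)"

lemma Hm: "good (Hm x)" "poly (Hm x) 1 = x"
  using theI'[OF good_ex1[of x]] unfolding Hm_def by auto

lemma Hm_eq: "good p \<Longrightarrow> Hm (poly p 1) = p"
  using good_ex1[of "poly p 1"] Hm[of "poly p 1"] by blast

lemma Hm_coeff: "coeff (Hm x) i \<in> G i" using Hm(1) unfolding good_def by blast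

lemma good_add: "good p \<Longrightarrow> good q \<Longrightarrow> good (p + q)"
  unfolding good_def by (auto intro: Gadd)
lemma good_neg: "good p \<Longrightarrow> good (- p)"
  unfolding good_def by (auto intro: Gneg)
lemma good_mult: "good p \<Longrightarrow> good q \<Longrightarrow> good (p * q)"
  unfolding good_def coeff_mult
proof (intro allI)
  fix n assume "\<forall>i. coeff p i \<in> G i" "\<forall>i. coeff q i \<in> G i"
  then show "(\<Sum>i\<le>n. coeff p i * coeff q (n - i)) \<in> G n"
  proof (intro Gsum)
    fix a assume "a \<in> {..n}"
    then have "a + (n - a) = n" by simp
    then show "coeff p a * coeff q (n - a) \<in> G n"
      using Gmult[of "coeff p a" a "coeff q (n - a)" "n - a"] \<open>\<forall>i. coeff p i \<in> G i\<close> \<open>\<forall>i. coeff q i \<in> G i\<close> by simp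
  qed simp
qed
lemma good_monom: "g \<in> G i \<Longrightarrow> good (monom g i)"
  unfolding good_def by (auto simp: coeff_monom G0)

lemma Hm_add: "Hm (x + y) = Hm x + Hm y"
  using Hm_eq[OF good_add[OF Hm(1) Hm(1)]] by (simp add: Hm(2))
lemma Hm_mult: "Hm (x * y) = Hm x * Hm y"
  using Hm_eq[OF good_mult[OF Hm(1) Hm(1)]] by (simp add: Hm(2))
lemma Hm_monom: "g \<in> G i \<Longrightarrow> Hm g = monom g i"
  using Hm_eq[OF good_monom] by (simp add: poly_monom)

lemma one_G0: "1 \<in> G 0"
proof -
  define e where "e = Hm 1"
  have key: "g * coeff e j = (if j = 0 then g else 0)" if g: "g \<in> G i" for g i j
  proof -
    have "monom g i = monom g i * e" unfolding e_def
      using Hm_mult[of g 1] Hm_monom[OF g] by simp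
    then have "coeff (monom g i) (i + j) = coeff (monom g i * e) (i + j)" by simp
    then show ?thesis by (simp add: coeff_monom_mult)
  qed
  have ej: "coeff e j = 0" if "j > 0" for j
  proof -
    have "coeff e j * coeff e 0 = coeff e j" using key[OF Hm_coeff[of 1 j, folded e_def], of 0] by simp
    moreover have "coeff e 0 * coeff e j = 0" using key[OF Hm_coeff[of 1 0, folded e_def], of j] that by simp
    ultimately show ?thesis by (simp add: mult.commute)
  qed
  have "e = [:coeff e 0:]"
    by (rule poly_eqI) (auto simp: coeff_pCons split: nat.split intro: ej)
  then have "coeff e 0 = 1" using Hm(2)[of 1] unfolding e_def by (metis poly_const_conv)
  then show ?thesis using Hm_coeff[of 1 0] unfolding e_def by simp
qed

lemma Hm_const: "c \<in> G 0 \<Longrightarrow> Hm c = [:c:]"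
  using Hm_monom[of c 0] by (simp add: monom_0)

lemma Hm_zero: "Hm 0 = 0" using Hm_eq[of 0] by (simp add: good_def G0)

lemma Hm_hom: "comm_ring_hom Hm"
  by unfold_locales (auto simp: Hm_add Hm_mult Hm_const[OF one_G0] Hm_zero)

lemma G0_mult: "x \<in> G 0 \<Longrightarrow> y \<in> G 0 \<Longrightarrow> x * y \<in> G 0"
  using Gmult[of x 0 y 0] by simp
lemma G0_pow: "x \<in> G 0 \<Longrightarrow> x ^ m \<in> G 0"
  by (induction m) (auto intro: one_G0 G0_mult)

end


context grd begin

definition pz :: "'a \<Rightarrow> 'a" where "pz x = poly (Hm x) 0"
definition phi :: "'a \<Rightarrow> 'a \<Rightarrow> 'a" where "phi l x = poly (Hm x) l"
definition psi :: "'a \<Rightarrow> 'a \<Rightarrow> 'a poly" where "psi l x = pcompose (Hm x) [:l, 1:]"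

lemma phi_hom: "comm_ring_hom (phi l)"
  by unfold_locales (auto simp: phi_def Hm_add Hm_mult Hm_const[OF one_G0] Hm_zero)
lemma pz_hom: "comm_ring_hom pz"
  using phi_hom[of 0] unfolding phi_def pz_def[abs_def] .
lemma psi_hom: "comm_ring_hom (psi l)"
  by unfold_locales (auto simp: psi_def Hm_add Hm_mult Hm_const[OF one_G0] Hm_zero pcompose_add pcompose_mult pcompose_1)

lemma pz_G: "g \<in> G i \<Longrightarrow> pz g = (if i = 0 then g else 0)"
  by (auto simp: pz_def Hm_monom poly_monom zero_power)

lemma pz_G0: "c \<in> G 0 \<Longrightarrow> pz c = c" using pz_G[of c 0] by simp
lemma phi_G0: "c \<in> G 0 \<Longrightarrow> phi l c = c" by (simp add: phi_def Hm_const)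
lemma psi_G0: "c \<in> G 0 \<Longrightarrow> psi l c = [:c:]" by (simp add: psi_def Hm_const)
lemma phi_one: "phi 1 x = x" by (simp add: phi_def Hm(2))

lemma map_pz_Hm: "map_poly pz (Hm x) = [:pz x:]"
proof (rule poly_eqI)
  fix i
  have "pz 0 = 0" using pz_G[OF G0[of 0]] by simp
  then have "coeff (map_poly pz (Hm x)) i = pz (coeff (Hm x) i)" by (simp add: coeff_map_poly)
  also have "\<dots> = coeff [:pz x:] i"
    using pz_G[OF Hm_coeff[of x i]] by (cases i) (auto simp: pz_def poly_0_coeff_0)
  finally show "coeff (map_poly pz (Hm x)) i = coeff [:pz x:] i" .
qed

lemma pz_phi: "pz (phi l x) = pz x"
proof -
  interpret h: comm_ring_hom pz by (rule pz_hom)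
  interpret mh: map_poly_comm_ring_hom pz ..
  have "pz (phi l x) = poly (map_poly pz (Hm x)) (pz l)" unfolding phi_def by simp
  then show ?thesis by (simp add: map_pz_Hm)
qed

lemma map_pz_psi: "map_poly pz (psi l x) = [:pz x:]"
proof -
  interpret h: comm_ring_hom pz by (rule pz_hom)
  show ?thesis unfolding psi_def h.map_poly_pcompose map_pz_Hm by simp
qed

lemma poly_psi: "poly (psi l x) m = phi (l + m) x"
  by (simp add: psi_def phi_def poly_pcompose)

lemma Rplus_pz: "x \<in> R_plus G \<Longrightarrow> pz x = 0"
proof -
  interpret h: comm_ring_hom pz by (rule pz_hom)
  assume "x \<in> R_plus G"
  then obtain N f where f: "\<forall>i. f i \<in> G i" "x = (\<Sum>i\<in>{1..N}. f i)" unfolding R_plus_def by blast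
  have "pz x = (\<Sum>i\<in>{1..N}. pz (f i))" unfolding f(2) by (simp add: h.hom_sum)
  also have "\<dots> = 0"
  proof (rule sum.neutral, intro ballI)
    fix i assume "i \<in> {1..N}"
    then show "pz (f i) = 0" using pz_G[OF f(1)[rule_format, of i]] by simp
  qed
  finally show ?thesis .
qed

lemma pz_Rplus: "pz x = 0 \<Longrightarrow> x \<in> R_plus G"
proof -
  assume 0: "pz x = 0"
  have "x = poly (Hm x) 1" by (simp add: Hm(2))
  also have "\<dots> = (\<Sum>i\<le>degree (Hm x). coeff (Hm x) i)" by (simp add: poly_altdef[of _ 1])
  also have "\<dots> = coeff (Hm x) 0 + (\<Sum>i\<in>{1..degree (Hm x)}. coeff (Hm x) i)"
    by (simp add: atMost_atLeast0 sum.atLeast_Suc_atMost)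
  also have "coeff (Hm x) 0 = 0" using 0 by (simp add: pz_def poly_0_coeff_0)
  finally have "x = (\<Sum>i\<in>{1..degree (Hm x)}. coeff (Hm x) i)" by simp
  then show ?thesis unfolding R_plus_def using Hm_coeff by blast
qed

end


lemma L0e:
  fixes M N :: "nat \<Rightarrow> 'a::comm_ring_1"
  assumes "i < n" "j < n"
  shows "(\<Sum>k<n. ((if i = k then \<alpha> else 0) + M k) * ((if k = j then \<beta> else 0) + N k))
       = (if i = j then \<alpha> * \<beta> else 0) + \<alpha> * N i + \<beta> * M j + (\<Sum>k<n. M k * N k)"
proof -
  have "(\<Sum>k<n. ((if i = k then \<alpha> else 0) + M k) * ((if k = j then \<beta> else 0) + N k))
     = (\<Sum>k<n. (if i = k then (if k = j then \<alpha> * \<beta> else 0) else 0))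
       + (\<Sum>k<n. (if i = k then \<alpha> * N k else 0)) + (\<Sum>k<n. (if k = j then \<beta> * M k else 0))
       + (\<Sum>k<n. M k * N k)"
    unfolding sum.distrib[symmetric]
    by (intro sum.cong refl) (cases "i = k"; cases "k = j"; simp add: algebra_simps)
  also have "\<dots> = (if i = j then \<alpha> * \<beta> else 0) + \<alpha> * N i + \<beta> * M j + (\<Sum>k<n. M k * N k)"
    using assms by (simp add: sum.delta sum.delta')
  finally show ?thesis .
qed

lemma mult_entry: "A \<in> carrier_mat n n \<Longrightarrow> B \<in> carrier_mat n n \<Longrightarrow> i < n \<Longrightarrow> j < n \<Longrightarrow>
   (A * B) $$ (i, j) = (\<Sum>k<n. A $$ (i, k) * B $$ (k, j))"
proof -
  assume a: "A \<in> carrier_mat n n" "B \<in> carrier_mat n n" "i < n" "j < n"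
  have "(A * B) $$ (i, j) = row A i \<bullet> col B j" using a by simp
  also have "\<dots> = (\<Sum>k\<in>{0..<n}. row A i $ k * col B j $ k)" using a by (simp add: scalar_prod_def)
  also have "\<dots> = (\<Sum>k<n. A $$ (i, k) * B $$ (k, j))" using a by (auto simp: atLeast0LessThan intro!: sum.cong)
  finally show ?thesis .
qed

definition Amat :: "nat \<Rightarrow> 'a::comm_ring_1 \<Rightarrow> 'a \<Rightarrow> 'a \<Rightarrow> nat \<Rightarrow> nat \<Rightarrow> 'a poly mat \<Rightarrow> 'a mat" where
  "Amat n x v e N p Ph = mat n n (\<lambda>(i, j). (if i = j then x ^ p else 0) + e * v ^ (N - p) * poly (Ph $$ (i, j)) (e * v ^ N))"

lemma Amat_carrier: "Amat n x v e N p Ph \<in> carrier_mat n n" by (simp add: Amat_def)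
lemma Amat_entry: "i < n \<Longrightarrow> j < n \<Longrightarrow> Amat n x v e N p Ph $$ (i, j) =
   (if i = j then x ^ p else 0) + e * v ^ (N - p) * poly (Ph $$ (i, j)) (e * v ^ N)"
  by (simp add: Amat_def)

lemma pCons0_cancel: "smult c (pCons 0 p) = 0 \<Longrightarrow> smult c p = 0" by simp

lemma GLem:
  fixes P Q Ph Qh :: "'a::comm_ring_1 poly mat"
  assumes car: "P \<in> carrier_mat n n" "Q \<in> carrier_mat n n"
    and hP: "\<And>i k. i < n \<Longrightarrow> k < n \<Longrightarrow> P $$ (i, k) = [:if i = k then (x * v) ^ p else 0:] + pCons 0 (Ph $$ (i, k))"
    and hQ: "\<And>i k. i < n \<Longrightarrow> k < n \<Longrightarrow> Q $$ (i, k) = [:if i = k then (x * v) ^ q else 0:] + pCons 0 (Qh $$ (i, k))"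
    and hyp: "\<And>i j. i < n \<Longrightarrow> j < n \<Longrightarrow> smult ((x * v) ^ L) ((P * Q) $$ (i, j)) = [:if i = j then (x * v) ^ L * (x * v) ^ (p + q) else 0:]"
    and NN: "p + q + L \<le> N"
    and ij: "i < n" "j < n"
  shows "x ^ L * (Amat n x v e N p Ph * Amat n x v e N q Qh) $$ (i, j) = (if i = j then x ^ L * x ^ (p + q) else 0)"
proof -
  define d where "d = (x * v) ^ L"
  define w where "w = e * v ^ N"
  define S where "S = (\<Sum>k<n. Ph $$ (i, k) * Qh $$ (k, j))"
  define E where "E = smult ((x*v)^p) (Qh $$ (i, j)) + smult ((x*v)^q) (Ph $$ (i, j)) + pCons 0 S"
  have PQ: "(P * Q) $$ (i, j) = [:if i = j then (x * v) ^ p * (x * v) ^ q else 0:] + pCons 0 E"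
  proof -
    have "(P * Q) $$ (i, j) = (\<Sum>k<n. P $$ (i, k) * Q $$ (k, j))" using car ij by (rule mult_entry)
    also have "\<dots> = (\<Sum>k<n. ((if i = k then [:(x * v) ^ p:] else 0) + pCons 0 (Ph $$ (i, k)))
                         * ((if k = j then [:(x * v) ^ q:] else 0) + pCons 0 (Qh $$ (k, j))))"
      using ij by (intro sum.cong refl) (simp add: hP hQ)
    also have "\<dots> = (if i = j then [:(x * v) ^ p:] * [:(x * v) ^ q:] else 0)
        + [:(x * v) ^ p:] * pCons 0 (Qh $$ (i, j)) + [:(x * v) ^ q:] * pCons 0 (Ph $$ (i, j))
        + (\<Sum>k<n. pCons 0 (Ph $$ (i, k)) * pCons 0 (Qh $$ (k, j)))"
      by (rule L0e[OF ij])
    also have "(\<Sum>k<n. pCons 0 (Ph $$ (i, k)) * pCons 0 (Qh $$ (k, j))) = pCons 0 (pCons 0 S)"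
      unfolding S_def by (simp add: pCons_0_hom.hom_sum[symmetric] sum_distrib_left)
    finally show ?thesis unfolding E_def by simp
  qed
  from hyp[OF ij] have "smult d (pCons 0 E) = 0" unfolding PQ d_def
    by (simp add: smult_add_right power_add)
  then have dE: "smult d E = 0" by simp
  have "poly (smult d E) w = 0" using dE by simp
  then have key: "d * ((x*v)^p * poly (Qh $$ (i, j)) w + (x*v)^q * poly (Ph $$ (i, j)) w
        + w * (\<Sum>k<n. poly (Ph $$ (i, k)) w * poly (Qh $$ (k, j)) w)) = 0"
    unfolding E_def S_def by (simp add: poly_sum)
  obtain r where r: "N = p + q + L + r" using NN le_Suc_ex by blast
  have "(Amat n x v e N p Ph * Amat n x v e N q Qh) $$ (i, j)
     = (\<Sum>k<n. Amat n x v e N p Ph $$ (i, k) * Amat n x v e N q Qh $$ (k, j))"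
    using ij by (intro mult_entry Amat_carrier)
  also have "\<dots> = (\<Sum>k<n. ((if i = k then x ^ p else 0) + e * v ^ (N - p) * poly (Ph $$ (i, k)) w)
       * ((if k = j then x ^ q else 0) + e * v ^ (N - q) * poly (Qh $$ (k, j)) w))"
    using ij by (intro sum.cong refl) (simp add: Amat_entry w_def)
  also have "\<dots> = (if i = j then x ^ p * x ^ q else 0) + x ^ p * (e * v ^ (N - q) * poly (Qh $$ (i, j)) w)
      + x ^ q * (e * v ^ (N - p) * poly (Ph $$ (i, j)) w)
      + (\<Sum>k<n. e * v ^ (N - p) * poly (Ph $$ (i, k)) w * (e * v ^ (N - q) * poly (Qh $$ (k, j)) w))"
    by (rule L0e[OF ij])
  also have "(\<Sum>k<n. e * v ^ (N - p) * poly (Ph $$ (i, k)) w * (e * v ^ (N - q) * poly (Qh $$ (k, j)) w))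
     = e * v ^ (N - p) * (e * v ^ (N - q)) * (\<Sum>k<n. poly (Ph $$ (i, k)) w * poly (Qh $$ (k, j)) w)"
    by (simp add: sum_distrib_left algebra_simps)
  finally have AC: "(Amat n x v e N p Ph * Amat n x v e N q Qh) $$ (i, j) = (if i = j then x ^ p * x ^ q else 0)
     + (x ^ p * (e * v ^ (N - q) * poly (Qh $$ (i, j)) w) + x ^ q * (e * v ^ (N - p) * poly (Ph $$ (i, j)) w)
      + e * v ^ (N - p) * (e * v ^ (N - q)) * (\<Sum>k<n. poly (Ph $$ (i, k)) w * poly (Qh $$ (k, j)) w))"
    by (simp add: algebra_simps)
  have "x ^ L * (x ^ p * (e * v ^ (N - q) * poly (Qh $$ (i, j)) w) + x ^ q * (e * v ^ (N - p) * poly (Ph $$ (i, j)) w)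
      + e * v ^ (N - p) * (e * v ^ (N - q)) * (\<Sum>k<n. poly (Ph $$ (i, k)) w * poly (Qh $$ (k, j)) w))
     = e * v ^ r * (d * ((x*v)^p * poly (Qh $$ (i, j)) w + (x*v)^q * poly (Ph $$ (i, j)) w
        + w * (\<Sum>k<n. poly (Ph $$ (i, k)) w * poly (Qh $$ (k, j)) w)))"
    unfolding r d_def w_def by (simp add: power_add power_mult_distrib algebra_simps)
  also have "\<dots> = 0" using key by simp
  finally show ?thesis unfolding AC by (simp add: algebra_simps power_add)
qed

lemma Amat_ev:
  assumes "P \<in> carrier_mat n n"
    and hP: "\<And>i k. i < n \<Longrightarrow> k < n \<Longrightarrow> P $$ (i, k) = [:if i = k then (x * v) ^ p else 0:] + pCons 0 (Ph $$ (i, k))"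
    and "p \<le> N" "i < n" "j < n"
  shows "v ^ p * Amat n x v e N p Ph $$ (i, j) = poly (P $$ (i, j)) (e * v ^ N)"
proof -
  obtain r where r: "N = p + r" using assms(3) le_Suc_ex by blast
  show ?thesis using assms(4,5) unfolding Amat_entry[OF assms(4,5)] hP[OF assms(4,5)] r
    by (simp add: power_add power_mult_distrib algebra_simps)
qed



lemma shift_decomp: "p = [:coeff p 0:] + pCons 0 (poly_shift 1 p)"
  by (rule poly_eqI) (auto simp: coeff_poly_shift coeff_pCons split: nat.split)
lemma shift_const: "poly_shift 1 [:c:] = 0"
  by (simp add: poly_eq_iff coeff_poly_shift)
lemma shift_const'[simp]: "poly_shift (Suc 0) [:c:] = 0"
  by (simp add: poly_eq_iff coeff_poly_shift)
lemma shift_smult: "poly_shift 1 (smult c p) = smult c (poly_shift 1 p)"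
  by (simp add: poly_eq_iff coeff_poly_shift)
lemma shift_map: "f 0 = 0 \<Longrightarrow> map_poly f (poly_shift 1 p) = poly_shift 1 (map_poly f p)"
  by (simp add: poly_eq_iff coeff_poly_shift coeff_map_poly)
lemma shift_map': "f 0 = 0 \<Longrightarrow> map_poly f (poly_shift (Suc 0) p) = poly_shift (Suc 0) (map_poly f p)"
  by (simp add: poly_eq_iff coeff_poly_shift coeff_map_poly)
lemma shift_smult': "poly_shift (Suc 0) (smult c p) = smult c (poly_shift (Suc 0) p)"
  by (simp add: poly_eq_iff coeff_poly_shift)
lemma const_hom: "comm_ring_hom (\<lambda>x::'a::comm_ring_1. [:x:])"
  by unfold_locales (auto simp: one_pCons)

context grd begin

lemma G0_u: "s \<in> G 0 \<Longrightarrow> t \<in> G 0 \<Longrightarrow> (s * t) ^ m \<in> G 0"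
  by (intro G0_pow G0_mult)

lemma Hm_delta: "c \<in> G 0 \<Longrightarrow> Hm (if P then c else 0) = [:if P then c else 0:]"
  by (auto simp: Hm_const Hm_zero)

lemma coreA1:
  fixes H B :: "'a mat"
  assumes sG: "s \<in> G 0" and tG: "t \<in> G 0" and bG: "b \<in> G 0" and NN: "K + J \<le> N"
    and car: "H \<in> carrier_mat n n" "B \<in> carrier_mat n n"
    and hH0: "\<And>i j. i < n \<Longrightarrow> j < n \<Longrightarrow> pz (H $$ (i, j)) = (if i = j then (s * t) ^ K else 0)"
    and hB0: "\<And>i j. i < n \<Longrightarrow> j < n \<Longrightarrow> pz (B $$ (i, j)) = (if i = j then (s * t) ^ J else 0)"
    and hHB: "H * B = (s * t) ^ (K + J) \<cdot>\<^sub>m 1\<^sub>m n"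
    and hBH: "B * H = (s * t) ^ (K + J) \<cdot>\<^sub>m 1\<^sub>m n"
    and hrow: "\<And>j. j < n \<Longrightarrow> H $$ (0, j) = (if 0 = j then (s * t) ^ K else 0)"
  shows "lGL n s (R_plus G) (Amat n s t b N K (map_mat (poly_shift 1 \<circ> Hm) H)) K
       \<and> first_row_e1 n s (Amat n s t b N K (map_mat (poly_shift 1 \<circ> Hm) H)) K
       \<and> t ^ K \<cdot>\<^sub>m Amat n s t b N K (map_mat (poly_shift 1 \<circ> Hm) H) = map_mat (phi (b * t ^ N)) H"
proof -
  interpret h: comm_ring_hom Hm by (rule Hm_hom)
  interpret p: comm_ring_hom pz by (rule pz_hom)
  interpret mp: map_poly_comm_ring_hom pz ..
  define P where "P = map_mat Hm H"
  define Q where "Q = map_mat Hm B"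
  define Ph where "Ph = map_mat (poly_shift 1 \<circ> Hm) H"
  define Qh where "Qh = map_mat (poly_shift 1 \<circ> Hm) B"
  define A1 where "A1 = Amat n s t b N K Ph"
  define B1 where "B1 = Amat n s t b N J Qh"
  have Pc: "P \<in> carrier_mat n n" "Q \<in> carrier_mat n n" using car by (auto simp: P_def Q_def)
  have decomp: "Hm x = [:pz x:] + pCons 0 (poly_shift 1 (Hm x))" for x
    using shift_decomp[of "Hm x"] by (simp add: pz_def poly_0_coeff_0)
  have hP: "P $$ (i, k) = [:if i = k then (s * t) ^ K else 0:] + pCons 0 (Ph $$ (i, k))" if "i < n" "k < n" for i k
    using that car decomp[of "H $$ (i, k)"] hH0[OF that] by (simp add: P_def Ph_def)
  have hQ: "Q $$ (i, k) = [:if i = k then (s * t) ^ J else 0:] + pCons 0 (Qh $$ (i, k))" if "i < n" "k < n" for i k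
    using that car decomp[of "B $$ (i, k)"] hB0[OF that] by (simp add: Q_def Qh_def)
  have PQ: "P * Q = map_mat Hm (H * B)" unfolding P_def Q_def using car by (simp add: h.mat_hom_mult)
  have QP: "Q * P = map_mat Hm (B * H)" unfolding P_def Q_def using car by (simp add: h.mat_hom_mult)
  have uG: "(s * t) ^ (K + J) \<in> G 0" using G0_u[OF sG tG] .
  have hyp1: "smult ((s * t) ^ 0) ((P * Q) $$ (i, j)) = [:if i = j then (s * t) ^ 0 * (s * t) ^ (K + J) else 0:]"
    if "i < n" "j < n" for i j
    using that car uG unfolding PQ hHB by (simp add: Hm_delta Hm_const)
  have hyp2: "smult ((s * t) ^ 0) ((Q * P) $$ (i, j)) = [:if i = j then (s * t) ^ 0 * (s * t) ^ (J + K) else 0:]"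
    if "i < n" "j < n" for i j
    using that car uG unfolding QP hBH by (simp add: Hm_delta Hm_const add.commute)
  have AB: "s ^ 0 * (A1 * B1) $$ (i, j) = (if i = j then s ^ 0 * s ^ (K + J) else 0)" if "i < n" "j < n" for i j
    unfolding A1_def B1_def by (rule GLem[OF Pc hP hQ hyp1 _ that]) (use NN in auto)
  have BA: "s ^ 0 * (B1 * A1) $$ (i, j) = (if i = j then s ^ 0 * s ^ (J + K) else 0)" if "i < n" "j < n" for i j
    unfolding A1_def B1_def by (rule GLem[OF Pc(2,1) hQ hP hyp2 _ that]) (use NN in auto)
  have A1c: "A1 \<in> carrier_mat n n" "B1 \<in> carrier_mat n n" by (auto simp: A1_def B1_def Amat_carrier)
  have inv: "\<exists>B m. B \<in> carrier_mat n n \<and> lmat_eq n s (A1 * B) (K + m) (1\<^sub>m n) 0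
                                  \<and> lmat_eq n s (B * A1) (K + m) (1\<^sub>m n) 0"
  proof (intro exI conjI)
    show "B1 \<in> carrier_mat n n" by fact
    show "lmat_eq n s (A1 * B1) (K + J) (1\<^sub>m n) 0" unfolding lmat_eq_def loc_eq_def
      using AB by (intro allI impI exI[of _ 0]) simp
    show "lmat_eq n s (B1 * A1) (K + J) (1\<^sub>m n) 0" unfolding lmat_eq_def loc_eq_def
      using BA by (intro allI impI exI[of _ 0]) (simp add: add.commute)
  qed
  define lam where "lam = b * t ^ N"
  have ev: "t ^ K * A1 $$ (i, j) = phi lam (H $$ (i, j))" if "i < n" "j < n" for i j
  proof -
    have "t ^ K * A1 $$ (i, j) = poly (P $$ (i, j)) (b * t ^ N)"
      unfolding A1_def by (rule Amat_ev[OF Pc(1) hP]) (use NN that in auto)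
    then show ?thesis using that car by (simp add: P_def phi_def lam_def)
  qed
  have pz_shift: "pz (poly (poly_shift 1 (Hm x)) y) = 0" for x y
  proof -
    have "pz (poly (poly_shift 1 (Hm x)) y) = poly (map_poly pz (poly_shift 1 (Hm x))) (pz y)" by (rule p.poly_map_poly[symmetric])
    also have "\<dots> = 0" by (simp only: shift_map[of pz, OF p.hom_zero] map_pz_Hm shift_const poly_0)
    finally show ?thesis .
  qed
  have modc: "A1 $$ (i, j) - (if i = j then s ^ K else 0) \<in> R_plus G" if "i < n" "j < n" for i j
    using that car pz_shift[of "H $$ (i, j)" "b * t ^ N"] by (intro pz_Rplus) (simp add: A1_def Amat_entry Ph_def p.hom_mult)
  have row: "A1 $$ (0, j) = (if 0 = j then s ^ K else 0)" if "j < n" for j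
  proof -
    have "Ph $$ (0, j) = 0" using that car hrow[OF that] G0_u[OF sG tG, of K]
      by (simp add: Ph_def Hm_delta shift_const)
    then show ?thesis using that by (simp add: A1_def Amat_entry)
  qed
  have "lGL n s (R_plus G) A1 K"
    unfolding lGL_def loc_mem_def loc_eq_def
  proof (intro conjI A1c inv allI impI)
    fix i j assume ij: "i < n" "j < n"
    show "\<exists>b\<in>R_plus G. \<exists>m l. s ^ l * ((A1 $$ (i, j) - (if i = j then s ^ K else 0)) * s ^ m - b * s ^ K) = 0"
      by (intro bexI[OF _ modc[OF ij]] exI[of _ K] exI[of _ 0]) simp
  qed
  moreover have "first_row_e1 n s A1 K" unfolding first_row_e1_def loc_eq_def
    using row by (intro allI impI exI[of _ 0]) simp
  moreover have "t ^ K \<cdot>\<^sub>m A1 = map_mat (phi lam) H"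
    using ev car A1c by (intro eq_matI) auto
  ultimately show ?thesis unfolding A1_def Ph_def lam_def by blast
qed

end


context grd begin

lemma coreA2:
  fixes H B :: "'a mat"
  assumes sG: "s \<in> G 0" and tG: "t \<in> G 0" and aG: "a \<in> G 0" and bG: "b \<in> G 0"
    and ab: "a * s ^ N + b * t ^ N = 1"
    and NN: "2 * (K + J) + K \<le> N"
    and car: "H \<in> carrier_mat n n" "B \<in> carrier_mat n n"
    and hHB: "H * B = (s * t) ^ (K + J) \<cdot>\<^sub>m 1\<^sub>m n"
    and hBH: "B * H = (s * t) ^ (K + J) \<cdot>\<^sub>m 1\<^sub>m n"
    and hrow: "\<And>j. j < n \<Longrightarrow> H $$ (0, j) = (if 0 = j then (s * t) ^ K else 0)"
  shows "\<exists>A2. lGL n t (R_plus G) A2 (K + J) \<and> first_row_e1 n t A2 (K + J)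
       \<and> s ^ (K + J) \<cdot>\<^sub>m A2 = map_mat (phi (b * t ^ N)) B * H"
proof -
  define lam where "lam = b * t ^ N"
  define mu where "mu = a * s ^ N"
  define c where "c = (s * t) ^ (K + J)"
  have cG: "c \<in> G 0" unfolding c_def by (rule G0_u[OF sG tG])
  have uKG: "(s * t) ^ K \<in> G 0" by (rule G0_u[OF sG tG])
  have lm: "lam + mu = 1" using ab by (simp add: lam_def mu_def add.commute)
  interpret ph: comm_ring_hom "phi lam" by (rule phi_hom)
  interpret ps: comm_ring_hom "psi lam" by (rule psi_hom)
  interpret cst: comm_ring_hom "\<lambda>x::'a. [:x:]" by (rule const_hom)
  interpret p: comm_ring_hom pz by (rule pz_hom)
  interpret mp: map_poly_comm_ring_hom pz ..
  have sh0: "semiring_hom (\<lambda>p::'a poly. poly p 0)" by unfold_locales auto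
  have shmu: "semiring_hom (\<lambda>p::'a poly. poly p (a * s ^ N))" by unfold_locales auto
  define Bl where "Bl = map_mat (phi lam) B"
  define Hl where "Hl = map_mat (phi lam) H"
  define cB where "cB = map_mat (\<lambda>x. [:x:]) Bl"
  define cH where "cH = map_mat (\<lambda>x. [:x:]) Hl"
  define pH where "pH = map_mat (psi lam) H"
  define pB where "pB = map_mat (psi lam) B"
  define P where "P = cB * pH"
  define Q where "Q = pB * cH"
  define Ph where "Ph = map_mat (poly_shift 1) P"
  define Qh where "Qh = map_mat (poly_shift 1) Q"
  have cars: "Bl \<in> carrier_mat n n" "Hl \<in> carrier_mat n n" "cB \<in> carrier_mat n n" "cH \<in> carrier_mat n n"
    "pH \<in> carrier_mat n n" "pB \<in> carrier_mat n n" "P \<in> carrier_mat n n" "Q \<in> carrier_mat n n"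
    using car by (auto simp: Bl_def Hl_def cB_def cH_def pH_def pB_def P_def Q_def)
  have cone: "map_mat f (c \<cdot>\<^sub>m 1\<^sub>m n) = f c \<cdot>\<^sub>m 1\<^sub>m n" if "f 0 = 0" "f c = f c * f 1" for f :: "'a \<Rightarrow> 'b::comm_ring_1"
    using that by (intro eq_matI) auto
  have BlHl: "Bl * Hl = c \<cdot>\<^sub>m 1\<^sub>m n"
  proof -
    have "Bl * Hl = map_mat (phi lam) (B * H)" unfolding Bl_def Hl_def using car by (simp add: ph.mat_hom_mult)
    also have "\<dots> = c \<cdot>\<^sub>m 1\<^sub>m n" unfolding hBH c_def[symmetric] using cG by (intro eq_matI) (auto simp: phi_G0)
    finally show ?thesis .
  qed
  have HlBl: "Hl * Bl = c \<cdot>\<^sub>m 1\<^sub>m n"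
  proof -
    have "Hl * Bl = map_mat (phi lam) (H * B)" unfolding Bl_def Hl_def using car by (simp add: ph.mat_hom_mult)
    also have "\<dots> = c \<cdot>\<^sub>m 1\<^sub>m n" unfolding hHB c_def[symmetric] using cG by (intro eq_matI) (auto simp: phi_G0)
    finally show ?thesis .
  qed
  have ev0P: "map_mat (\<lambda>p. poly p 0) P = c \<cdot>\<^sub>m 1\<^sub>m n"
  proof -
    have "map_mat (\<lambda>p. poly p 0) P = map_mat (\<lambda>p. poly p 0) cB * map_mat (\<lambda>p. poly p 0) pH"
      unfolding P_def using cars by (simp add: semiring_hom.mat_hom_mult[OF sh0])
    also have "map_mat (\<lambda>p. poly p 0) cB = Bl" using cars by (intro eq_matI) (auto simp: cB_def)
    also have "map_mat (\<lambda>p. poly p 0) pH = Hl" using car by (intro eq_matI) (auto simp: pH_def Hl_def poly_psi)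
    finally show ?thesis using BlHl by simp
  qed
  have ev0Q: "map_mat (\<lambda>p. poly p 0) Q = c \<cdot>\<^sub>m 1\<^sub>m n"
  proof -
    have "map_mat (\<lambda>p. poly p 0) Q = map_mat (\<lambda>p. poly p 0) pB * map_mat (\<lambda>p. poly p 0) cH"
      unfolding Q_def using cars by (simp add: semiring_hom.mat_hom_mult[OF sh0])
    also have "map_mat (\<lambda>p. poly p 0) cH = Hl" using cars by (intro eq_matI) (auto simp: cH_def)
    also have "map_mat (\<lambda>p. poly p 0) pB = Bl" using car by (intro eq_matI) (auto simp: pB_def Bl_def poly_psi)
    finally show ?thesis using BlHl by simp
  qed
  have ct: "c = (t * s) ^ (K + J)" by (simp add: c_def mult.commute)
  have hP: "P $$ (i, k) = [:if i = k then (t * s) ^ (K + J) else 0:] + pCons 0 (Ph $$ (i, k))" if "i < n" "k < n" for i k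
  proof -
    have "coeff (P $$ (i, k)) 0 = (if i = k then c else 0)"
      using arg_cong[OF ev0P, of "\<lambda>M. M $$ (i, k)"] that cars by (simp add: poly_0_coeff_0)
    then show ?thesis using that cars by (subst shift_decomp[of "P $$ (i, k)"]) (simp add: Ph_def ct[symmetric])
  qed
  have hQ: "Q $$ (i, k) = [:if i = k then (t * s) ^ (K + J) else 0:] + pCons 0 (Qh $$ (i, k))" if "i < n" "k < n" for i k
  proof -
    have "coeff (Q $$ (i, k)) 0 = (if i = k then c else 0)"
      using arg_cong[OF ev0Q, of "\<lambda>M. M $$ (i, k)"] that cars by (simp add: poly_0_coeff_0)
    then show ?thesis using that cars by (subst shift_decomp[of "Q $$ (i, k)"]) (simp add: Qh_def ct[symmetric])
  qed
  have pHB: "pH * pB = [:c:] \<cdot>\<^sub>m 1\<^sub>m n"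
  proof -
    have "pH * pB = map_mat (psi lam) (H * B)" unfolding pH_def pB_def using car by (simp add: ps.mat_hom_mult)
    also have "\<dots> = [:c:] \<cdot>\<^sub>m 1\<^sub>m n" unfolding hHB c_def[symmetric] using cG by (intro eq_matI) (auto simp: psi_G0)
    finally show ?thesis .
  qed
  have pBH: "pB * pH = [:c:] \<cdot>\<^sub>m 1\<^sub>m n"
  proof -
    have "pB * pH = map_mat (psi lam) (B * H)" unfolding pH_def pB_def using car by (simp add: ps.mat_hom_mult)
    also have "\<dots> = [:c:] \<cdot>\<^sub>m 1\<^sub>m n" unfolding hBH c_def[symmetric] using cG by (intro eq_matI) (auto simp: psi_G0)
    finally show ?thesis .
  qed
  have cBH: "cB * cH = [:c:] \<cdot>\<^sub>m 1\<^sub>m n"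
  proof -
    have "cB * cH = map_mat (\<lambda>x. [:x:]) (Bl * Hl)" unfolding cB_def cH_def using cars by (simp add: cst.mat_hom_mult)
    then show ?thesis unfolding BlHl by (auto intro!: eq_matI)
  qed
  have cHB: "cH * cB = [:c:] \<cdot>\<^sub>m 1\<^sub>m n"
  proof -
    have "cH * cB = map_mat (\<lambda>x. [:x:]) (Hl * Bl)" unfolding cB_def cH_def using cars by (simp add: cst.mat_hom_mult)
    then show ?thesis unfolding HlBl by (auto intro!: eq_matI)
  qed
  have PQ: "P * Q = [:c:] \<cdot>\<^sub>m ([:c:] \<cdot>\<^sub>m 1\<^sub>m n)"
  proof -
    have e1: "P * Q = cB * (pH * (pB * cH))" unfolding P_def Q_def using cars by (intro assoc_mult_mat) auto
    have e2: "pH * (pB * cH) = (pH * pB) * cH" using cars by (intro assoc_mult_mat[symmetric]) auto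
    have "P * Q = cB * (([:c:] \<cdot>\<^sub>m 1\<^sub>m n) * cH)" using e1 e2 pHB by simp
    also have "([:c:] \<cdot>\<^sub>m 1\<^sub>m n) * cH = [:c:] \<cdot>\<^sub>m (1\<^sub>m n * cH)"
      using cars by (intro mult_smult_assoc_mat) auto
    also have "1\<^sub>m n * cH = cH" using cars by simp
    also have "cB * ([:c:] \<cdot>\<^sub>m cH) = [:c:] \<cdot>\<^sub>m (cB * cH)"
      using cars by (intro mult_smult_distrib) auto
    finally show ?thesis unfolding cBH .
  qed
  have QP: "Q * P = [:c:] \<cdot>\<^sub>m ([:c:] \<cdot>\<^sub>m 1\<^sub>m n)"
  proof -
    have e1: "Q * P = pB * (cH * (cB * pH))" unfolding P_def Q_def using cars by (intro assoc_mult_mat) auto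
    have e2: "cH * (cB * pH) = (cH * cB) * pH" using cars by (intro assoc_mult_mat[symmetric]) auto
    have "Q * P = pB * (([:c:] \<cdot>\<^sub>m 1\<^sub>m n) * pH)" using e1 e2 cHB by simp
    also have "([:c:] \<cdot>\<^sub>m 1\<^sub>m n) * pH = [:c:] \<cdot>\<^sub>m (1\<^sub>m n * pH)"
      using cars by (intro mult_smult_assoc_mat) auto
    also have "1\<^sub>m n * pH = pH" using cars by simp
    also have "pB * ([:c:] \<cdot>\<^sub>m pH) = [:c:] \<cdot>\<^sub>m (pB * pH)"
      using cars by (intro mult_smult_distrib) auto
    finally show ?thesis unfolding pBH .
  qed
  have hyp1: "smult ((t * s) ^ 0) ((P * Q) $$ (i, j)) = [:if i = j then (t * s) ^ 0 * (t * s) ^ (K + J + (K + J)) else 0:]"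
    if "i < n" "j < n" for i j using that unfolding PQ by (simp add: ct power_add)
  have hyp2: "smult ((t * s) ^ 0) ((Q * P) $$ (i, j)) = [:if i = j then (t * s) ^ 0 * (t * s) ^ (K + J + (K + J)) else 0:]"
    if "i < n" "j < n" for i j using that unfolding QP by (simp add: ct power_add)
  define A2 where "A2 = Amat n t s a N (K + J) Ph"
  define C2 where "C2 = Amat n t s a N (K + J) Qh"
  have AC: "t ^ 0 * (A2 * C2) $$ (i, j) = (if i = j then t ^ 0 * t ^ (K + J + (K + J)) else 0)" if "i < n" "j < n" for i j
    unfolding A2_def C2_def by (rule GLem[OF cars(7,8) hP hQ hyp1 _ that]) (use NN in auto)
  have CA: "t ^ 0 * (C2 * A2) $$ (i, j) = (if i = j then t ^ 0 * t ^ (K + J + (K + J)) else 0)" if "i < n" "j < n" for i j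
    unfolding A2_def C2_def by (rule GLem[OF cars(8,7) hQ hP hyp2 _ that]) (use NN in auto)
  have A2c: "A2 \<in> carrier_mat n n" "C2 \<in> carrier_mat n n" by (auto simp: A2_def C2_def Amat_carrier)
  have inv: "\<exists>B m. B \<in> carrier_mat n n \<and> lmat_eq n t (A2 * B) (K + J + m) (1\<^sub>m n) 0
                                  \<and> lmat_eq n t (B * A2) (K + J + m) (1\<^sub>m n) 0"
  proof (intro exI conjI)
    show "C2 \<in> carrier_mat n n" by fact
    show "lmat_eq n t (A2 * C2) (K + J + (K + J)) (1\<^sub>m n) 0" unfolding lmat_eq_def loc_eq_def
      using AC by (intro allI impI exI[of _ 0]) simp
    show "lmat_eq n t (C2 * A2) (K + J + (K + J)) (1\<^sub>m n) 0" unfolding lmat_eq_def loc_eq_def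
      using CA by (intro allI impI exI[of _ 0]) simp
  qed
  have evP: "map_mat (\<lambda>p. poly p mu) P = Bl * H"
  proof -
    have "map_mat (\<lambda>p. poly p mu) P = map_mat (\<lambda>p. poly p mu) cB * map_mat (\<lambda>p. poly p mu) pH"
      unfolding P_def mu_def using cars by (simp add: semiring_hom.mat_hom_mult[OF shmu])
    also have "map_mat (\<lambda>p. poly p mu) cB = Bl" using cars by (intro eq_matI) (auto simp: cB_def)
    also have "map_mat (\<lambda>p. poly p mu) pH = H" using car by (intro eq_matI) (auto simp: pH_def poly_psi lm phi_one)
    finally show ?thesis .
  qed
  have A2ev: "s ^ (K + J) \<cdot>\<^sub>m A2 = Bl * H"
  proof (rule eq_matI)
    fix i j assume "i < dim_row (Bl * H)" "j < dim_col (Bl * H)"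
    then have ij: "i < n" "j < n" using cars car by auto
    have "s ^ (K + J) * A2 $$ (i, j) = poly (P $$ (i, j)) (a * s ^ N)"
      unfolding A2_def by (rule Amat_ev[OF cars(7) hP]) (use NN ij in auto)
    also have "\<dots> = (Bl * H) $$ (i, j)" using arg_cong[OF evP, of "\<lambda>M. M $$ (i, j)"] ij cars
      by (simp add: mu_def)
    finally show "(s ^ (K + J) \<cdot>\<^sub>m A2) $$ (i, j) = (Bl * H) $$ (i, j)" using ij A2c by simp
  qed (use A2c cars car in auto)
  have mpc: "map_poly pz [:x:] = [:pz x:]" for x
    by (rule poly_eqI) (simp add: coeff_map_poly p.hom_zero coeff_pCons split: nat.split)
  have smp: "semiring_hom (map_poly pz)" by unfold_locales (auto simp: hom_distribs)
  have mapP: "map_mat (map_poly pz) P = map_mat (\<lambda>x. [:x:]) (c \<cdot>\<^sub>m 1\<^sub>m n)"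
  proof -
    have "map_mat (map_poly pz) P = map_mat (map_poly pz) cB * map_mat (map_poly pz) pH"
      unfolding P_def using cars by (simp add: semiring_hom.mat_hom_mult[OF smp])
    also have "map_mat (map_poly pz) cB = map_mat (\<lambda>x. [:x:]) (map_mat pz B)"
      using cars car by (intro eq_matI) (auto simp: cB_def Bl_def pz_phi mpc)
    also have "map_mat (map_poly pz) pH = map_mat (\<lambda>x. [:x:]) (map_mat pz H)"
      using car by (intro eq_matI) (auto simp: pH_def map_pz_psi)
    also have "map_mat (\<lambda>x. [:x:]) (map_mat pz B) * map_mat (\<lambda>x. [:x:]) (map_mat pz H)
        = map_mat (\<lambda>x. [:x:]) (map_mat pz B * map_mat pz H)"
      using car by (simp add: cst.mat_hom_mult)
    also have "map_mat pz B * map_mat pz H = map_mat pz (B * H)" using car by (simp add: p.mat_hom_mult)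
    also have "\<dots> = c \<cdot>\<^sub>m 1\<^sub>m n" unfolding hBH c_def[symmetric] using cG by (intro eq_matI) (auto simp: pz_G0)
    finally show ?thesis .
  qed
  have pzPh: "pz (poly (Ph $$ (i, j)) mu) = 0" if "i < n" "j < n" for i j
  proof -
    have "pz (poly (Ph $$ (i, j)) mu) = poly (map_poly pz (Ph $$ (i, j))) (pz mu)" by (rule p.poly_map_poly[symmetric])
    also have "map_poly pz (Ph $$ (i, j)) = poly_shift 1 (map_poly pz (P $$ (i, j)))"
      using that cars by (simp add: Ph_def shift_map'[of pz, OF p.hom_zero])
    also have "map_poly pz (P $$ (i, j)) = [:if i = j then c else 0:]"
      using arg_cong[OF mapP, of "\<lambda>M. M $$ (i, j)"] that cars by simp
    finally show ?thesis by (simp add: shift_const)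
  qed
  have modc: "A2 $$ (i, j) - (if i = j then t ^ (K + J) else 0) \<in> R_plus G" if "i < n" "j < n" for i j
    using that pzPh[OF that] by (intro pz_Rplus) (simp add: A2_def Amat_entry p.hom_mult mu_def)
  have Hl0: "Hl $$ (0, m) = (if 0 = m then (s * t) ^ K else 0)" if "m < n" for m
    using that car hrow[OF that] uKG by (auto simp: Hl_def phi_G0 ph.hom_zero)
  have rowBl: "(s * t) ^ K * Bl $$ (0, k) = (if 0 = k then c else 0)" if "k < n" for k
  proof -
    have n0: "0 < n" using that by simp
    have "(Hl * Bl) $$ (0, k) = (\<Sum>m<n. Hl $$ (0, m) * Bl $$ (m, k))" using cars n0 that by (intro mult_entry) auto
    also have "\<dots> = (\<Sum>m<n. if 0 = m then (s * t) ^ K * Bl $$ (m, k) else 0)"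
      using Hl0 by (intro sum.cong refl) auto
    also have "\<dots> = (s * t) ^ K * Bl $$ (0, k)" using n0 by (simp add: sum.delta)
    finally show ?thesis using HlBl n0 that by (cases "k = 0") (auto simp: eq_commute[of c])
  qed
  have rowP: "smult ((s * t) ^ K) (P $$ (0, j)) = [:(if 0 = j then c * (s * t) ^ K else 0):]" if "j < n" for j
  proof -
    have n0: "0 < n" using that by simp
    have "P $$ (0, j) = (\<Sum>k<n. cB $$ (0, k) * pH $$ (k, j))" unfolding P_def using cars n0 that by (intro mult_entry) auto
    then have "smult ((s * t) ^ K) (P $$ (0, j)) = (\<Sum>k<n. [:(s * t) ^ K * Bl $$ (0, k):] * pH $$ (k, j))"
      using cars n0 by (simp add: smult_sum2 cB_def)
    also have "\<dots> = (\<Sum>k<n. if 0 = k then [:c:] * pH $$ (k, j) else 0)"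
      using rowBl by (intro sum.cong refl) auto
    also have "\<dots> = [:c:] * pH $$ (0, j)" using n0 by (simp add: sum.delta)
    also have "pH $$ (0, j) = [:if 0 = j then (s * t) ^ K else 0:]"
      using that car hrow[OF that] uKG by (auto simp: pH_def psi_G0 ps.hom_zero)
    finally show ?thesis by simp
  qed
  have rowA2: "A2 $$ (0, j) = (if 0 = j then t ^ (K + J) else 0) + a * s ^ (N - (K + J)) * poly (Ph $$ (0, j)) mu"
    and rowPh: "(s * t) ^ K * poly (Ph $$ (0, j)) mu = 0" if "j < n" for j
  proof -
    have n0: "0 < n" using that by simp
    show "A2 $$ (0, j) = (if 0 = j then t ^ (K + J) else 0) + a * s ^ (N - (K + J)) * poly (Ph $$ (0, j)) mu"
      using that n0 by (simp add: A2_def Amat_entry mu_def)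
    have "smult ((s * t) ^ K) (Ph $$ (0, j)) = poly_shift 1 (smult ((s * t) ^ K) (P $$ (0, j)))"
      using that n0 cars by (simp add: Ph_def shift_smult')
    also have "\<dots> = 0" unfolding rowP[OF that] by (simp add: shift_const)
    finally have "smult ((s * t) ^ K) (Ph $$ (0, j)) = 0" .
    then show "(s * t) ^ K * poly (Ph $$ (0, j)) mu = 0" by (metis poly_0 poly_smult)
  qed
  have e1: "first_row_e1 n t A2 (K + J)" unfolding first_row_e1_def loc_eq_def
  proof (intro allI impI exI[of _ K])
    fix j assume j: "j < n"
    have "K \<le> N - (K + J)" using NN by simp
    then obtain r where r: "N - (K + J) = K + r" using le_Suc_ex by blast
    have "t ^ K * (A2 $$ (0, j) * t ^ 0 - (if j = 0 then 1 else 0) * t ^ (K + J))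
        = a * s ^ r * ((s * t) ^ K * poly (Ph $$ (0, j)) mu)"
      unfolding rowA2[OF j] r by (simp add: power_add power_mult_distrib algebra_simps)
    then show "t ^ K * (A2 $$ (0, j) * t ^ 0 - (if j = 0 then 1 else 0) * t ^ (K + J)) = 0"
      using rowPh[OF j] by simp
  qed
  have "lGL n t (R_plus G) A2 (K + J)"
    unfolding lGL_def loc_mem_def loc_eq_def
  proof (intro conjI A2c inv allI impI)
    fix i j assume ij: "i < n" "j < n"
    show "\<exists>b\<in>R_plus G. \<exists>m l. t ^ l * ((A2 $$ (i, j) - (if i = j then t ^ (K + J) else 0)) * t ^ m - b * t ^ (K + J)) = 0"
      by (intro bexI[OF _ modc[OF ij]] exI[of _ "K + J"] exI[of _ 0]) simp
  qed
  then show ?thesis using e1 A2ev unfolding Bl_def lam_def by blast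
qed

end


lemma unif:
  fixes u :: "'a::comm_ring_1" and n :: nat
  assumes "\<And>i j. i < n \<Longrightarrow> j < n \<Longrightarrow> \<exists>l. u ^ l * f i j = 0"
  shows "\<exists>L. \<forall>i<n. \<forall>j<n. u ^ L * f i j = 0"
proof -
  obtain l where l: "\<And>i j. i < n \<Longrightarrow> j < n \<Longrightarrow> u ^ l i j * f i j = 0"
    using assms by metis
  define L where "L = (\<Sum>i<n. \<Sum>j<n. l i j)"
  have "u ^ L * f i j = 0" if "i < n" "j < n" for i j
  proof -
    have "l i j \<le> (\<Sum>j<n. l i j)" using that by (intro member_le_sum) auto
    also have "\<dots> \<le> L" unfolding L_def using that by (intro member_le_sum[of i "{..<n}" "\<lambda>i. \<Sum>j<n. l i j"]) auto
    finally obtain r where "L = l i j + r" using le_Suc_ex by blast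
    then have "u ^ L * f i j = u ^ r * (u ^ l i j * f i j)" by (simp add: power_add algebra_simps)
    then show ?thesis using l[OF that] by simp
  qed
  then show ?thesis by blast
qed

lemma kill_eq: "(a::'a::comm_ring_1) * (x - y) = 0 \<Longrightarrow> a * x = a * y"
  by (simp add: right_diff_distrib)

lemma pow_kill: "u ^ l * (x::'a::comm_ring_1) = 0 \<Longrightarrow> l \<le> L \<Longrightarrow> u ^ L * x = 0"
proof -
  assume a: "u ^ l * x = 0" "l \<le> L"
  then obtain r where "L = l + r" using le_Suc_ex by blast
  then have "u ^ L * x = u ^ r * (u ^ l * x)" by (simp add: power_add algebra_simps)
  then show ?thesis using a by simp
qed

context grd begin

lemma comax:
  assumes sG: "s \<in> G 0" and tG: "t \<in> G 0" and a0: "a0 \<in> G 0" and b0: "b0 \<in> G 0"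
    and e: "a0 * s + b0 * t = 1"
  shows "\<exists>a\<in>G 0. \<exists>b\<in>G 0. a * s ^ N + b * t ^ N = 1"
proof -
  have st1: "\<exists>x\<in>G 0. \<exists>y\<in>G 0. x * s ^ N + y * t = 1" for N
  proof (induction N)
    case 0
    show ?case by (intro bexI[of _ 1] bexI[of _ 0]) (auto intro: one_G0 G0)
  next
    case (Suc N)
    then obtain x y where xy: "x \<in> G 0" "y \<in> G 0" "x * s ^ N + y * t = 1" by blast
    have "1 = (x * s ^ N + y * t) * (a0 * s + b0 * t)" using xy e by simp
    also have "\<dots> = (x * a0) * s ^ Suc N + (x * s ^ N * b0 + y * a0 * s + y * b0 * t) * t"
      by (simp add: algebra_simps)
    finally show ?case using xy a0 b0 sG tG
      by (intro bexI[of _ "x * a0"] bexI[of _ "x * s ^ N * b0 + y * a0 * s + y * b0 * t"])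
         (auto intro!: Gadd G0_mult G0_pow)
  qed
  obtain x y where xy: "x \<in> G 0" "y \<in> G 0" "x * s ^ N + y * t = 1" using st1 by blast
  have "\<exists>x'\<in>G 0. \<exists>y'\<in>G 0. x' * s ^ N + y' * t ^ M = 1" for M
  proof (induction M)
    case 0
    show ?case by (intro bexI[of _ 0] bexI[of _ 1]) (auto intro: one_G0 G0)
  next
    case (Suc M)
    then obtain x' y' where xy': "x' \<in> G 0" "y' \<in> G 0" "x' * s ^ N + y' * t ^ M = 1" by blast
    have "1 = (x' * s ^ N + y' * t ^ M) * (x * s ^ N + y * t)" using xy xy' by simp
    also have "\<dots> = (x' * x * s ^ N + x' * y * t + y' * t ^ M * x) * s ^ N + (y' * y) * t ^ Suc M"
      by (simp add: algebra_simps)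
    finally show ?case using xy xy' sG tG
      by (intro bexI[of _ "x' * x * s ^ N + x' * y * t + y' * t ^ M * x"] bexI[of _ "y' * y"])
         (auto intro!: Gadd G0_mult G0_pow)
  qed
  then show ?thesis by blast
qed

end

theorem mainTheorem5:
  fixes G :: "nat \<Rightarrow> 'a::comm_ring_1 set"
    and s t :: 'a and n :: nat and H :: "'a mat" and k :: nat
  assumes "(1::'a) \<noteq> 0"
    and "noetherian TYPE('a)"
    and "finite_krull_dim TYPE('a)"
    and "graded_ring G"
    and "nontrivial_grading G"
    and "s \<in> G 0" and "t \<in> G 0"
    and "\<exists>a\<in>G 0. \<exists>b\<in>G 0. a * s + b * t = 1"
    and "lGL n (s * t) (R_plus G) H k"
    and "first_row_e1 n (s * t) H k"
  shows "\<exists>A1 k1 A2 k2.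
           lGL n s (R_plus G) A1 k1 \<and> lGL n t (R_plus G) A2 k2 \<and>
           first_row_e1 n s A1 k1 \<and> first_row_e1 n t A2 k2 \<and>
           lmat_eq n (s * t) H k ((t ^ k1 \<cdot>\<^sub>m A1) * (s ^ k2 \<cdot>\<^sub>m A2)) (k1 + k2)"
proof -
  interpret grd G by unfold_locales (rule assms(4))
  interpret p: comm_ring_hom pz by (rule pz_hom)
  note sG = assms(6) and tG = assms(7)
  define u where "u = s * t"
  have uG: "u ^ m \<in> G 0" for m unfolding u_def by (rule G0_u[OF sG tG])
  obtain a0 b0 where ab0: "a0 \<in> G 0" "b0 \<in> G 0" "a0 * s + b0 * t = 1" using assms(8) by blast
  note H0c = assms(9)[unfolded lGL_def, THEN conjunct1]
  obtain B0 m0 where B0: "B0 \<in> carrier_mat n n" "lmat_eq n u (H * B0) (k + m0) (1\<^sub>m n) 0"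
    "lmat_eq n u (B0 * H) (k + m0) (1\<^sub>m n) 0"
    using assms(9) unfolding lGL_def u_def by blast
  have modH: "\<forall>i<n. \<forall>j<n. loc_mem u (R_plus G) (H $$ (i, j) - (if i = j then u ^ k else 0)) k"
    using assms(9) unfolding lGL_def u_def by blast
  have C1: "\<exists>l. u ^ l * ((H * B0) $$ (i, j) - (if i = j then u ^ (k + m0) else 0)) = 0" if ij: "i < n" "j < n" for i j
  proof -
    obtain l where "u ^ l * ((H * B0) $$ (i, j) * u ^ 0 - 1\<^sub>m n $$ (i, j) * u ^ (k + m0)) = 0"
      using B0(2) ij unfolding lmat_eq_def loc_eq_def by blast
    then show ?thesis using ij by (intro exI[of _ l]) (cases "i = j"; simp)
  qed
  have C2: "\<exists>l. u ^ l * ((B0 * H) $$ (i, j) - (if i = j then u ^ (k + m0) else 0)) = 0" if ij: "i < n" "j < n" for i j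
  proof -
    obtain l where "u ^ l * ((B0 * H) $$ (i, j) * u ^ 0 - 1\<^sub>m n $$ (i, j) * u ^ (k + m0)) = 0"
      using B0(3) ij unfolding lmat_eq_def loc_eq_def by blast
    then show ?thesis using ij by (intro exI[of _ l]) (cases "i = j"; simp)
  qed
  have C3: "\<exists>l. u ^ l * (pz (H $$ (i, j)) - (if i = j then u ^ k else 0)) = 0" if ij: "i < n" "j < n" for i j
  proof -
    obtain b m l where b: "b \<in> R_plus G" "u ^ l * ((H $$ (i, j) - (if i = j then u ^ k else 0)) * u ^ m - b * u ^ k) = 0"
      using modH ij unfolding loc_mem_def loc_eq_def by blast
    have "pz (u ^ l * ((H $$ (i, j) - (if i = j then u ^ k else 0)) * u ^ m - b * u ^ k)) = 0" using b by simp
    then have "u ^ l * ((pz (H $$ (i, j)) - (if i = j then u ^ k else 0)) * u ^ m) = 0"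
      using uG Rplus_pz[OF b(1)] by (simp add: p.hom_mult p.hom_minus pz_G0 p.hom_zero split: if_splits)
    then show ?thesis by (intro exI[of _ "l + m"]) (simp add: power_add algebra_simps)
  qed
  have C4: "\<exists>l. u ^ l * (H $$ (0, j) - (if 0 = j then u ^ k else 0)) = 0" if ij: "i < n" "j < n" for i j
  proof -
    obtain l where "u ^ l * (H $$ (0, j) * u ^ 0 - (if j = 0 then 1 else 0) * u ^ k) = 0"
      using assms(10) ij unfolding first_row_e1_def loc_eq_def u_def by blast
    then show ?thesis by (intro exI[of _ l]) (cases "j = 0"; simp)
  qed
  obtain L1 where L1: "\<forall>i<n. \<forall>j<n. u ^ L1 * ((H * B0) $$ (i, j) - (if i = j then u ^ (k + m0) else 0)) = 0"
    using unif[of n u "\<lambda>i j. (H * B0) $$ (i, j) - (if i = j then u ^ (k + m0) else 0)"] C1 by blast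
  obtain L2 where L2: "\<forall>i<n. \<forall>j<n. u ^ L2 * ((B0 * H) $$ (i, j) - (if i = j then u ^ (k + m0) else 0)) = 0"
    using unif[of n u "\<lambda>i j. (B0 * H) $$ (i, j) - (if i = j then u ^ (k + m0) else 0)"] C2 by blast
  obtain L3 where L3: "\<forall>i<n. \<forall>j<n. u ^ L3 * (pz (H $$ (i, j)) - (if i = j then u ^ k else 0)) = 0"
    using unif[of n u "\<lambda>i j. pz (H $$ (i, j)) - (if i = j then u ^ k else 0)"] C3 by blast
  obtain L4 where L4: "\<forall>i<n. \<forall>j<n. u ^ L4 * (H $$ (0, j) - (if 0 = j then u ^ k else 0)) = 0"
    using unif[of n u "\<lambda>i j. H $$ (0, j) - (if 0 = j then u ^ k else 0)"] C4 by blast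
  define c where "c = L1 + L2 + L3 + L4"
  define K where "K = k + c"
  define H1 where "H1 = u ^ c \<cdot>\<^sub>m H"
  have H1c: "H1 \<in> carrier_mat n n" using H0c by (simp add: H1_def)
  have hH0: "pz (H1 $$ (i, j)) = (if i = j then u ^ K else 0)" if "i < n" "j < n" for i j
  proof -
    have "u ^ c * (pz (H $$ (i, j)) - (if i = j then u ^ k else 0)) = 0"
      by (rule pow_kill[OF L3[rule_format, OF that]]) (simp add: c_def)
    then have e: "u ^ c * pz (H $$ (i, j)) = u ^ c * (if i = j then u ^ k else 0)" by (rule kill_eq)
    have "pz (H1 $$ (i, j)) = u ^ c * pz (H $$ (i, j))" using that H0c uG by (simp add: H1_def p.hom_mult pz_G0)
    also have "\<dots> = (if i = j then u ^ K else 0)" unfolding e by (simp add: K_def power_add mult.commute)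
    finally show ?thesis .
  qed
  have hrow: "H1 $$ (0, j) = (if 0 = j then u ^ K else 0)" if "j < n" for j
  proof -
    have "u ^ c * (H $$ (0, j) - (if 0 = j then u ^ k else 0)) = 0"
      using that by (intro pow_kill[OF L4[rule_format, of 0 j]]) (auto simp: c_def)
    then have e: "u ^ c * H $$ (0, j) = u ^ c * (if 0 = j then u ^ k else 0)" by (rule kill_eq)
    have "H1 $$ (0, j) = u ^ c * H $$ (0, j)" using that H0c by (simp add: H1_def)
    also have "\<dots> = (if 0 = j then u ^ K else 0)" unfolding e by (simp add: K_def power_add mult.commute)
    finally show ?thesis .
  qed
  have H1B0: "H1 * B0 = u ^ (K + m0) \<cdot>\<^sub>m 1\<^sub>m n"
  proof (rule eq_matI)
    fix i j assume "i < dim_row (u ^ (K + m0) \<cdot>\<^sub>m 1\<^sub>m n)" "j < dim_col (u ^ (K + m0) \<cdot>\<^sub>m 1\<^sub>m n)"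
    then have ij: "i < n" "j < n" by auto
    have "u ^ c * ((H * B0) $$ (i, j) - (if i = j then u ^ (k + m0) else 0)) = 0"
      by (rule pow_kill[OF L1[rule_format, OF ij]]) (simp add: c_def)
    then have k1: "u ^ c * (H * B0) $$ (i, j) = u ^ c * (if i = j then u ^ (k + m0) else 0)" by (rule kill_eq)
    have "H1 * B0 = u ^ c \<cdot>\<^sub>m (H * B0)" unfolding H1_def using H0c B0(1) by (rule mult_smult_assoc_mat)
    then have "(H1 * B0) $$ (i, j) = u ^ c * (H * B0) $$ (i, j)" using ij H0c B0(1) by simp
    also have "\<dots> = (u ^ (K + m0) \<cdot>\<^sub>m 1\<^sub>m n) $$ (i, j)"
      unfolding k1 using ij by (simp add: K_def power_add mult.commute)
    finally show "(H1 * B0) $$ (i, j) = (u ^ (K + m0) \<cdot>\<^sub>m 1\<^sub>m n) $$ (i, j)" .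
  qed (use H1c B0(1) in auto)
  have B0H1: "B0 * H1 = u ^ (K + m0) \<cdot>\<^sub>m 1\<^sub>m n"
  proof (rule eq_matI)
    fix i j assume "i < dim_row (u ^ (K + m0) \<cdot>\<^sub>m 1\<^sub>m n)" "j < dim_col (u ^ (K + m0) \<cdot>\<^sub>m 1\<^sub>m n)"
    then have ij: "i < n" "j < n" by auto
    have "u ^ c * ((B0 * H) $$ (i, j) - (if i = j then u ^ (k + m0) else 0)) = 0"
      by (rule pow_kill[OF L2[rule_format, OF ij]]) (simp add: c_def)
    then have k1: "u ^ c * (B0 * H) $$ (i, j) = u ^ c * (if i = j then u ^ (k + m0) else 0)" by (rule kill_eq)
    have "B0 * H1 = u ^ c \<cdot>\<^sub>m (B0 * H)" unfolding H1_def using B0(1) H0c by (rule mult_smult_distrib)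
    then have "(B0 * H1) $$ (i, j) = u ^ c * (B0 * H) $$ (i, j)" using ij H0c B0(1) by simp
    also have "\<dots> = (u ^ (K + m0) \<cdot>\<^sub>m 1\<^sub>m n) $$ (i, j)"
      unfolding k1 using ij by (simp add: K_def power_add mult.commute)
    finally show "(B0 * H1) $$ (i, j) = (u ^ (K + m0) \<cdot>\<^sub>m 1\<^sub>m n) $$ (i, j)" .
  qed (use H1c B0(1) in auto)
  have pzB0: "u ^ K * pz (B0 $$ (i, j)) = (if i = j then u ^ (K + m0) else 0)" if "i < n" "j < n" for i j
  proof -
    have "pz ((H1 * B0) $$ (i, j)) = pz (\<Sum>m<n. H1 $$ (i, m) * B0 $$ (m, j))"
      using mult_entry[OF H1c B0(1) that] by simp
    also have "\<dots> = (\<Sum>m<n. pz (H1 $$ (i, m)) * pz (B0 $$ (m, j)))" by (simp add: p.hom_sum p.hom_mult)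
    also have "\<dots> = (\<Sum>m<n. if i = m then u ^ K * pz (B0 $$ (m, j)) else 0)"
      using hH0 that by (intro sum.cong refl) auto
    also have "\<dots> = u ^ K * pz (B0 $$ (i, j))" using that by (simp add: sum.delta)
    finally show ?thesis unfolding H1B0 using that uG by (auto simp: pz_G0 p.hom_zero)
  qed
  define J where "J = K + m0"
  define B1 where "B1 = u ^ K \<cdot>\<^sub>m B0"
  have B1c: "B1 \<in> carrier_mat n n" using B0(1) by (simp add: B1_def)
  have hB0: "pz (B1 $$ (i, j)) = (if i = j then u ^ J else 0)" if "i < n" "j < n" for i j
    using that B0(1) pzB0[OF that] uG by (simp add: B1_def p.hom_mult pz_G0 J_def)
  have hHB: "H1 * B1 = u ^ (K + J) \<cdot>\<^sub>m 1\<^sub>m n"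
  proof -
    have "H1 * B1 = u ^ K \<cdot>\<^sub>m (H1 * B0)" unfolding B1_def using H1c B0(1) by (rule mult_smult_distrib)
    then show ?thesis unfolding H1B0 J_def by (auto intro!: eq_matI simp: power_add)
  qed
  have hBH: "B1 * H1 = u ^ (K + J) \<cdot>\<^sub>m 1\<^sub>m n"
  proof -
    have "B1 * H1 = u ^ K \<cdot>\<^sub>m (B0 * H1)" unfolding B1_def using B0(1) H1c by (rule mult_smult_assoc_mat)
    then show ?thesis unfolding B0H1 J_def by (auto intro!: eq_matI simp: power_add)
  qed
  define N where "N = 2 * (K + J) + K"
  obtain a b where ab: "a \<in> G 0" "b \<in> G 0" "a * s ^ N + b * t ^ N = 1"
    using comax[OF sG tG ab0] by blast
  define A1 where "A1 = Amat n s t b N K (map_mat (poly_shift 1 \<circ> Hm) H1)"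
  have r1: "lGL n s (R_plus G) A1 K \<and> first_row_e1 n s A1 K \<and> t ^ K \<cdot>\<^sub>m A1 = map_mat (phi (b * t ^ N)) H1"
    unfolding A1_def
    by (rule coreA1[OF sG tG ab(2) _ H1c B1c hH0[unfolded u_def] hB0[unfolded u_def] hHB[unfolded u_def]
          hBH[unfolded u_def] hrow[unfolded u_def]]) (simp add: N_def)
  obtain A2 where r2: "lGL n t (R_plus G) A2 (K + J)" "first_row_e1 n t A2 (K + J)"
    "s ^ (K + J) \<cdot>\<^sub>m A2 = map_mat (phi (b * t ^ N)) B1 * H1"
    using coreA2[OF sG tG ab(1,2,3) _ H1c B1c hHB[unfolded u_def] hBH[unfolded u_def] hrow[unfolded u_def]]
    by (auto simp: N_def)
  interpret ph: comm_ring_hom "phi (b * t ^ N)" by (rule phi_hom)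
  have prod: "(t ^ K \<cdot>\<^sub>m A1) * (s ^ (K + J) \<cdot>\<^sub>m A2) = u ^ (K + J) \<cdot>\<^sub>m H1"
  proof -
    have "(t ^ K \<cdot>\<^sub>m A1) * (s ^ (K + J) \<cdot>\<^sub>m A2) = map_mat (phi (b * t ^ N)) H1 * (map_mat (phi (b * t ^ N)) B1 * H1)"
      using r1 r2(3) by simp
    also have "\<dots> = (map_mat (phi (b * t ^ N)) H1 * map_mat (phi (b * t ^ N)) B1) * H1"
      using H1c B1c by (intro assoc_mult_mat[symmetric]) auto
    also have "map_mat (phi (b * t ^ N)) H1 * map_mat (phi (b * t ^ N)) B1 = map_mat (phi (b * t ^ N)) (H1 * B1)"
      using H1c B1c by (simp add: ph.mat_hom_mult)
    also have "\<dots> = u ^ (K + J) \<cdot>\<^sub>m 1\<^sub>m n" unfolding hHB using uG by (auto intro!: eq_matI simp: phi_G0)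
    also have "(u ^ (K + J) \<cdot>\<^sub>m 1\<^sub>m n) * H1 = u ^ (K + J) \<cdot>\<^sub>m (1\<^sub>m n * H1)"
      using H1c by (intro mult_smult_assoc_mat) auto
    finally show ?thesis using H1c by simp
  qed
  have "lmat_eq n (s * t) H k ((t ^ K \<cdot>\<^sub>m A1) * (s ^ (K + J) \<cdot>\<^sub>m A2)) (K + (K + J))"
    unfolding lmat_eq_def loc_eq_def prod u_def[symmetric]
  proof (intro allI impI exI[of _ 0])
    fix i j assume ij: "i < n" "j < n"
    show "u ^ 0 * (H $$ (i, j) * u ^ (K + (K + J)) - (u ^ (K + J) \<cdot>\<^sub>m H1) $$ (i, j) * u ^ k) = 0"
      using ij H0c by (simp add: H1_def K_def power_add algebra_simps)
  qed
  then show ?thesis using r1 r2 by blast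
qed


end
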